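(* Let $l\le n$ be positive integers and let $\mathbb F\subseteq\mathbb D_1^n$ satisfy $\mathrm{lh}(\mathbb F)\le l$. If $|\mathbb F|<2^l-1$, then there exists an index set $\mathbb F_0\subseteq\mathbb D_1^n\setminus\mathbb F$ of cardinality $2^l-1-|\mathbb F|$ such that $\mathrm{lh}(\mathbb F\cup\mathbb F_0)\le l$.
   Context: Dyadic intervals: $\Delta_k^{(j)}:=[\frac{j-1}{2^k},\frac{j}{2^k})$ for $k\ge0$. Dyadic tree $\mathbb D:=\{(k,j):k\ge1;\ j=1,\dots,2^{k-1}\}$; $\mathbb D_1^n:=\{(k,j):k=1,\dots,n;\ j=1,\dots,2^{k-1}\}$. Branches: $\mathbb B(t):=\{(k,j)\in\mathbb D:t\in\Delta_{k-1}^{(j)}\}$ for $t\in[0,1)$; local height of a finite $\mathbb F\subseteq\mathbb D$: $\mathrm{lh}(\mathbb F):=\max_{t\in[0,1)}|\mathbb F\cap\mathbb B(t)|$. *)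

theory Defs
  imports Complex_Main
begin

definition dyadic_interval :: "nat \<Rightarrow> nat \<Rightarrow> real set" where
  "dyadic_interval k j = {(real j - 1) / 2 ^ k ..< real j / 2 ^ k}"

definition dyadic_tree :: "(nat \<times> nat) set" where
  "dyadic_tree = {(k, j). k \<ge> 1 \<and> 1 \<le> j \<and> j \<le> 2 ^ (k - 1)}"

definition dyadic_tree_upto :: "nat \<Rightarrow> (nat \<times> nat) set" where
  "dyadic_tree_upto n = {(k, j). 1 \<le> k \<and> k \<le> n \<and> 1 \<le> j \<and> j \<le> 2 ^ (k - 1)}"

definition branch :: "real \<Rightarrow> (nat \<times> nat) set" where
  "branch t = {(k, j) \<in> dyadic_tree. t \<in> dyadic_interval (k - 1) j}"

definition local_height :: "(nat \<times> nat) set \<Rightarrow> nat" where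
  "local_height F = Max ((\<lambda>t. card (F \<inter> branch t)) ` {0..<1})"

end

theory Submission
  imports Defs
begin

definition lpath :: "nat \<Rightarrow> nat \<Rightarrow> (nat \<times> nat) set" where
  "lpath H x = (\<lambda>a. (a, x div 2 ^ (H - a))) ` {..H}"

definition subt :: "nat \<Rightarrow> nat \<Rightarrow> nat \<Rightarrow> (nat \<times> nat) set" where
  "subt H d q = {(a, b). d \<le> a \<and> a \<le> H \<and> b div 2 ^ (a - d) = q}"

lemma lpath_iff: "(a, b) \<in> lpath H x \<longleftrightarrow> a \<le> H \<and> b = x div 2 ^ (H - a)"
  unfolding lpath_def by auto

lemma div_chain:
  assumes "d \<le> a" "a \<le> H"
  shows "(x::nat) div 2 ^ (H - a) div 2 ^ (a - d) = x div 2 ^ (H - d)"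
proof -
  have "(2::nat) ^ (H - a) * 2 ^ (a - d) = 2 ^ (H - d)"
    using assms by (simp flip: power_add)
  then show ?thesis by (metis div_mult2_eq)
qed

lemma subt_split:
  assumes "d < H"
  shows "subt H d q = insert (d, q) (subt H (Suc d) (2*q) \<union> subt H (Suc d) (2*q+1))"
proof -
  have "b div 2 ^ (a - d) = b div 2 ^ (a - Suc d) div 2" if "Suc d \<le> a" for a b :: nat
  proof -
    have "(2::nat) ^ (a - d) = 2 ^ (a - Suc d) * 2" using that
      by (metis Suc_diff_le diff_Suc_Suc power_Suc2 Suc_le_lessD)
    then show ?thesis by (simp add: div_mult2_eq)
  qed
  note key = this
  show ?thesis
  proof (intro equalityI subsetI)
    fix w assume w: "w \<in> subt H d q"
    obtain a b where ab: "w = (a, b)" by force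
    show "w \<in> insert (d, q) (subt H (Suc d) (2*q) \<union> subt H (Suc d) (2*q+1))"
    proof (cases "a = d")
      case True then show ?thesis using w ab by (simp add: subt_def)
    next
      case False
      then have a: "Suc d \<le> a" "a \<le> H" and bq: "b div 2 ^ (a - d) = q" using w ab by (auto simp: subt_def)
      then have "b div 2 ^ (a - Suc d) div 2 = q" using key[OF a(1)] by simp
      then have "b div 2 ^ (a - Suc d) = 2*q \<or> b div 2 ^ (a - Suc d) = 2*q+1" by linarith
      then show ?thesis using a ab by (auto simp: subt_def)
    qed
  next
    fix w assume w: "w \<in> insert (d, q) (subt H (Suc d) (2*q) \<union> subt H (Suc d) (2*q+1))"
    obtain a b where ab: "w = (a, b)" by force
    show "w \<in> subt H d q"
    proof (cases "w = (d, q)")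
      case True then show ?thesis using assms by (simp add: subt_def)
    next
      case False
      then obtain c where c: "c = 2*q \<or> c = 2*q+1" "(a, b) \<in> subt H (Suc d) c" using w ab by auto
      then have a: "Suc d \<le> a" "a \<le> H" "b div 2 ^ (a - Suc d) = c" by (auto simp: subt_def)
      then have "b div 2 ^ (a - d) = q" using key[OF a(1)] c(1) by auto
      then show ?thesis using a ab by (simp add: subt_def)
    qed
  qed
qed


lemma subt_lpath:
  assumes "(a, b) \<in> subt H d q" "(a, b) \<in> lpath H x"
  shows "x div 2 ^ (H - d) = q"
  using assms div_chain[of d a H x] unfolding subt_def by (auto simp: lpath_iff)

lemma card_path_above:
  assumes "(d, q) \<notin> G"
  shows "card (G \<inter> subt H d q \<inter> lpath H x) \<le> H - d"
proof -
  have "G \<inter> subt H d q \<inter> lpath H x \<subseteq> (\<lambda>a. (a, x div 2 ^ (H - a))) ` {Suc d..H}"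
  proof
    fix w assume w: "w \<in> G \<inter> subt H d q \<inter> lpath H x"
    obtain a b where ab: "w = (a, b)" by force
    have "d \<le> a" "a \<le> H" "b = x div 2 ^ (H - a)" using w ab by (auto simp: subt_def lpath_iff)
    moreover have "a \<noteq> d"
    proof
      assume "a = d"
      then have "b = q" using w ab subt_lpath[of a b H d q x] by (auto simp: lpath_iff)
      then show False using w ab assms \<open>a = d\<close> by auto
    qed
    ultimately show "w \<in> (\<lambda>a. (a, x div 2 ^ (H - a))) ` {Suc d..H}" using ab by auto
  qed
  then have "card (G \<inter> subt H d q \<inter> lpath H x) \<le> card ((\<lambda>a. (a, x div 2 ^ (H - a))) ` {Suc d..H})"
    by (intro card_mono) auto
  also have "\<dots> \<le> card {Suc d..H}" by (rule card_image_le) auto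
  finally show ?thesis by simp
qed

lemma core:
  assumes "finite G"
  shows "d + e = H \<Longrightarrow> m \<le> e + 1 \<Longrightarrow>
    (\<forall>w \<in> subt H d q - G. \<exists>x. w \<in> lpath H x \<and> m \<le> card (G \<inter> subt H d q \<inter> lpath H x)) \<Longrightarrow>
    2 ^ m - 1 \<le> card (G \<inter> subt H d q)"
proof (induction e arbitrary: d q m)
  case 0
  have S: "subt H d q = {(d, q)}" using 0 by (auto simp: subt_def)
  show ?case
  proof (cases "m = 0")
    case True then show ?thesis by simp
  next
    case False
    then have m1: "m = 1" using 0 by simp
    show ?thesis
    proof (cases "(d, q) \<in> G")
      case True then show ?thesis using S m1 by simp
    next
      case False
      then obtain x where "1 \<le> card (G \<inter> subt H d q \<inter> lpath H x)"
        using 0(3) S m1 by auto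
      then show ?thesis using S False by simp
    qed
  qed
next
  case (Suc e)
  have dH: "d < H" using Suc.prems by simp
  define S0 where "S0 = subt H (Suc d) (2*q)"
  define S1 where "S1 = subt H (Suc d) (2*q+1)"
  have Ssplit: "subt H d q = insert (d, q) (S0 \<union> S1)"
    unfolding S0_def S1_def by (rule subt_split[OF dH])
  have nr0: "(d, q) \<notin> S0" and nr1: "(d, q) \<notin> S1" unfolding S0_def S1_def subt_def by auto
  have disj: "S0 \<inter> S1 = {}" unfolding S0_def S1_def subt_def by auto
  define r where "r = card (G \<inter> {(d, q)})"
  have r01: "r \<le> 1" unfolding r_def by (simp add: card_le_Suc0_iff_eq)
  have cardS: "card (G \<inter> subt H d q) = r + card (G \<inter> S0) + card (G \<inter> S1)"
  proof -
    have "G \<inter> subt H d q = (G \<inter> {(d, q)}) \<union> ((G \<inter> S0) \<union> (G \<inter> S1))" using Ssplit by auto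
    moreover have "card ((G \<inter> {(d, q)}) \<union> ((G \<inter> S0) \<union> (G \<inter> S1))) =
        card (G \<inter> {(d, q)}) + card ((G \<inter> S0) \<union> (G \<inter> S1))"
      by (rule card_Un_disjoint) (use assms nr0 nr1 in auto)
    moreover have "card ((G \<inter> S0) \<union> (G \<inter> S1)) = card (G \<inter> S0) + card (G \<inter> S1)"
      by (rule card_Un_disjoint) (use assms disj in auto)
    ultimately show ?thesis unfolding r_def by simp
  qed
  have pc: "card (G \<inter> subt H d q \<inter> lpath H x) \<le> r + card (G \<inter> subt H (Suc d) c \<inter> lpath H x)"
    if "c = 2*q \<or> c = 2*q+1" "w \<in> subt H (Suc d) c" "w \<in> lpath H x" for c w x
  proof -
    obtain a b where ab: "w = (a, b)" by force
    have xc: "x div 2 ^ (H - Suc d) = c"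
      using that ab subt_lpath[of a b H "Suc d" c x] by auto
    have "G \<inter> subt H d q \<inter> lpath H x \<subseteq> (G \<inter> {(d, q)}) \<union> (G \<inter> subt H (Suc d) c \<inter> lpath H x)"
    proof
      fix v assume v: "v \<in> G \<inter> subt H d q \<inter> lpath H x"
      obtain a' b' where v': "v = (a', b')" by force
      show "v \<in> (G \<inter> {(d, q)}) \<union> (G \<inter> subt H (Suc d) c \<inter> lpath H x)"
      proof (cases "v = (d, q)")
        case True then show ?thesis using v by auto
      next
        case False
        then obtain c' where c': "v \<in> subt H (Suc d) c'" using v Ssplit S0_def S1_def by auto
        then have "c' = c" using subt_lpath[of a' b' H "Suc d" c' x] v v' xc by auto
        then show ?thesis using c' v by auto
      qed
    qed
    then have "card (G \<inter> subt H d q \<inter> lpath H x) \<le> card ((G \<inter> {(d, q)}) \<union> (G \<inter> subt H (Suc d) c \<inter> lpath H x))"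
      by (intro card_mono) (use assms in auto)
    also have "\<dots> \<le> r + card (G \<inter> subt H (Suc d) c \<inter> lpath H x)" unfolding r_def by (rule card_Un_le)
    finally show ?thesis .
  qed
  have sat: "\<forall>w \<in> subt H (Suc d) c - G. \<exists>x. w \<in> lpath H x \<and> m - r \<le> card (G \<inter> subt H (Suc d) c \<inter> lpath H x)"
    if "c = 2*q \<or> c = 2*q+1" for c
  proof
    fix w assume w: "w \<in> subt H (Suc d) c - G"
    then have "w \<in> subt H d q - G" using Ssplit that S0_def S1_def by auto
    then obtain x where x: "w \<in> lpath H x" "m \<le> card (G \<inter> subt H d q \<inter> lpath H x)"
      using Suc.prems(3) by blast
    then have "m \<le> r + card (G \<inter> subt H (Suc d) c \<inter> lpath H x)" using pc[OF that _ x(1)] w by fastforce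
    then show "\<exists>x. w \<in> lpath H x \<and> m - r \<le> card (G \<inter> subt H (Suc d) c \<inter> lpath H x)" using x(1) by auto
  qed
  have mr: "m - r \<le> e + 1"
  proof (cases "(d, q) \<in> G")
    case True then show ?thesis using Suc.prems(2) r_def by simp
  next
    case False
    then have "(d, q) \<in> subt H d q - G" using dH by (auto simp: subt_def)
    then obtain x where "m \<le> card (G \<inter> subt H d q \<inter> lpath H x)" using Suc.prems(3) by blast
    with card_path_above[OF False, of H x] Suc.prems(1) show ?thesis by simp
  qed
  have I0: "2 ^ (m - r) - 1 \<le> card (G \<inter> S0)"
    unfolding S0_def by (rule Suc.IH) (use Suc.prems(1) mr sat[of "2*q"] in auto)
  have I1: "2 ^ (m - r) - 1 \<le> card (G \<inter> S1)"
    unfolding S1_def by (rule Suc.IH) (use Suc.prems(1) mr sat[of "2*q+1"] in auto)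
  show ?case
  proof (cases "m = 0")
    case True then show ?thesis by simp
  next
    case False
    have "(2::nat) ^ m - 1 \<le> r + 2 * (2 ^ (m - r) - 1)"
    proof (cases "r = 0")
      case True
      have "(1::nat) \<le> 2 ^ m" by simp
      then show ?thesis using True by simp
    next
      case False
      then have "r = 1" using r01 by simp
      moreover obtain m' where "m = Suc m'" using \<open>m \<noteq> 0\<close> by (cases m) auto
      moreover have "(1::nat) \<le> 2 ^ m'" by simp
      ultimately show ?thesis by simp
    qed
    then show ?thesis using cardS I0 I1 by linarith
  qed
qed


lemma finite_upto: "finite (dyadic_tree_upto n)"
proof -
  have "dyadic_tree_upto n \<subseteq> {..n} \<times> {..(2::nat) ^ n}"
  proof
    fix w assume "w \<in> dyadic_tree_upto n"
    then obtain k j where w: "w = (k, j)" "k \<le> n" "j \<le> 2 ^ (k - 1)"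
      unfolding dyadic_tree_upto_def by auto
    have "(2::nat) ^ (k - 1) \<le> 2 ^ n" using w(2) by (intro power_increasing) auto
    then have "j \<le> 2 ^ n" using w(3) by linarith
    then show "w \<in> {..n} \<times> {..(2::nat) ^ n}" using w by auto
  qed
  then show ?thesis by (rule finite_subset) auto
qed

lemma lh_ge:
  assumes "finite F" "t \<in> {0..<1}"
  shows "card (F \<inter> branch t) \<le> local_height F"
  unfolding local_height_def
proof (rule Max_ge)
  show "finite ((\<lambda>t. card (F \<inter> branch t)) ` {0..<1})"
    by (rule finite_subset[of _ "{..card F}"]) (auto intro!: card_mono assms(1))
qed (use assms in auto)

lemma lh_le:
  assumes "finite F" "\<And>t. t \<in> {0..<1} \<Longrightarrow> card (F \<inter> branch t) \<le> l"
  shows "local_height F \<le> l"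
  unfolding local_height_def
proof (subst Max_le_iff)
  show "finite ((\<lambda>t. card (F \<inter> branch t)) ` {0..<1})"
    by (rule finite_subset[of _ "{..card F}"]) (auto intro!: card_mono assms(1))
qed (use assms in auto)

lemma lh_mono:
  assumes "A \<subseteq> B" "finite B"
  shows "local_height A \<le> local_height B"
proof (rule lh_le)
  show "finite A" using assms finite_subset by blast
  fix t :: real assume t: "t \<in> {0..<1}"
  have "card (A \<inter> branch t) \<le> card (B \<inter> branch t)" using assms by (intro card_mono) auto
  also have "\<dots> \<le> local_height B" by (rule lh_ge[OF assms(2) t])
  finally show "card (A \<inter> branch t) \<le> local_height B" .
qed

lemma branch_char:
  assumes t: "t \<in> {0..<1}" and n: "1 \<le> n" and kj: "(k, j) \<in> dyadic_tree_upto n"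
  shows "(k, j) \<in> branch t \<longleftrightarrow> j - 1 = nat \<lfloor>t * 2 ^ (n - 1)\<rfloor> div 2 ^ (n - 1 - (k - 1))"
proof -
  have k: "1 \<le> k" "k \<le> n" and j: "1 \<le> j" "j \<le> 2 ^ (k - 1)" using kj unfolding dyadic_tree_upto_def by auto
  have inD: "(k, j) \<in> dyadic_tree" using k j unfolding dyadic_tree_def by auto
  have p: "(0::real) < 2 ^ (k - 1)" by simp
  have "(k, j) \<in> branch t \<longleftrightarrow> (real j - 1) / 2 ^ (k - 1) \<le> t \<and> t < real j / 2 ^ (k - 1)"
    using inD unfolding branch_def dyadic_interval_def by auto
  also have "\<dots> \<longleftrightarrow> real j - 1 \<le> t * 2 ^ (k - 1) \<and> t * 2 ^ (k - 1) < real j"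
    using p by (simp add: divide_le_eq less_divide_eq)
  also have "\<dots> \<longleftrightarrow> \<lfloor>t * 2 ^ (k - 1)\<rfloor> = int (j - 1)"
    using j by (simp add: floor_eq_iff of_nat_diff)
  also have "\<lfloor>t * 2 ^ (k - 1)\<rfloor> = \<lfloor>t * 2 ^ (n - 1)\<rfloor> div 2 ^ (n - 1 - (k - 1))"
  proof -
    have e: "(2::real) ^ (n - 1) = 2 ^ (k - 1) * 2 ^ (n - 1 - (k - 1))"
      using k by (simp flip: power_add)
    have "(t * 2 ^ (n - 1)) / 2 ^ (n - 1 - (k - 1)) = t * (2::real) ^ (k - 1)"
      by (subst e) simp
    then have "t * 2 ^ (k - 1) = (t * 2 ^ (n - 1)) / real_of_int (2 ^ (n - 1 - (k - 1)))"
      by simp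
    then show ?thesis by (simp add: floor_divide_real_eq_div del: of_int_power)
  qed
  also have "\<lfloor>t * 2 ^ (n - 1)\<rfloor> div 2 ^ (n - 1 - (k - 1)) = int (nat \<lfloor>t * 2 ^ (n - 1)\<rfloor> div 2 ^ (n - 1 - (k - 1)))"
  proof -
    have "0 \<le> \<lfloor>t * 2 ^ (n - 1)\<rfloor>" using t by auto
    then show ?thesis by (simp add: zdiv_int)
  qed
  finally show ?thesis by (simp add: eq_commute)
qed


theorem corollary4p2:
  fixes l n :: nat and F :: "(nat \<times> nat) set"
  assumes "1 \<le> l" and "l \<le> n"
    and "F \<subseteq> dyadic_tree_upto n"
    and "local_height F \<le> l"
    and "card F < 2 ^ l - 1"
  shows "\<exists>F0. F0 \<subseteq> dyadic_tree_upto n - F \<and> card F0 = 2 ^ l - 1 - card F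
           \<and> local_height (F \<union> F0) \<le> l"
proof -
  define Dn where "Dn = dyadic_tree_upto n"
  define H where "H = n - 1"
  have n1: "1 \<le> n" using assms by simp
  have finD: "finite Dn" unfolding Dn_def by (rule finite_upto)
  define P where "P G \<longleftrightarrow> F \<subseteq> G \<and> G \<subseteq> Dn \<and> local_height G \<le> l" for G
  have PF: "P F" using assms unfolding P_def Dn_def by auto
  have "\<forall>G. P G \<longrightarrow> card G < card Dn + 1"
    using finD by (auto simp: P_def intro: card_mono le_imp_less_Suc)
  from ex_has_greatest_nat[OF PF this] obtain G where
    PG: "P G" and Gmax: "\<And>G'. P G' \<Longrightarrow> card G' \<le> card G" by blast
  have GD: "G \<subseteq> Dn" and FG: "F \<subseteq> G" and lhG: "local_height G \<le> l" using PG P_def by auto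
  have finG: "finite G" using GD finD finite_subset by blast
  have satG: "\<exists>t\<in>{0..<1}. w \<in> branch t \<and> l \<le> card (G \<inter> branch t)" if w: "w \<in> Dn - G" for w
  proof -
    have "\<not> P (insert w G)"
    proof
      assume "P (insert w G)"
      then have "card (insert w G) \<le> card G" by (rule Gmax)
      then show False using w finG by simp
    qed
    then have "\<not> local_height (insert w G) \<le> l" using w PG unfolding P_def by auto
    then obtain t where t: "t \<in> {0..<1}" and big: "\<not> card (insert w G \<inter> branch t) \<le> l"
      using lh_le[of "insert w G" l] finG by auto
    have le: "card (G \<inter> branch t) \<le> l" using lh_ge[OF finG t] lhG by simp
    show ?thesis
    proof (cases "w \<in> branch t")
      case True
      then have "insert w G \<inter> branch t = insert w (G \<inter> branch t)" by auto
      then have "card (insert w G \<inter> branch t) \<le> Suc (card (G \<inter> branch t))"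
        using finG by (simp add: card_insert_if)
      then show ?thesis using True t big by auto
    next
      case False
      then have "insert w G \<inter> branch t = G \<inter> branch t" by auto
      then show ?thesis using big le by simp
    qed
  qed
  define \<phi> where "\<phi> = (\<lambda>(k::nat, j::nat). (k - 1, j - 1))"
  define G0 where "G0 = \<phi> ` G"
  have injD: "inj_on \<phi> Dn"
    unfolding inj_on_def \<phi>_def Dn_def dyadic_tree_upto_def by auto
  have injG: "inj_on \<phi> G" using inj_on_subset[OF injD GD] .
  have cG0: "card G0 = card G" unfolding G0_def using card_image[OF injG] .
  have finG0: "finite G0" unfolding G0_def using finG by simp
  have G0sub: "G0 \<subseteq> subt H 0 0"
    unfolding G0_def
  proof
    fix v assume "v \<in> \<phi> ` G"
    then obtain k j where kj: "(k, j) \<in> Dn" "v = (k - 1, j - 1)" using GD \<phi>_def by auto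
    then have "1 \<le> k" "k \<le> n" "1 \<le> j" "j \<le> 2 ^ (k - 1)" unfolding Dn_def dyadic_tree_upto_def by auto
    then show "v \<in> subt H 0 0" using kj unfolding subt_def H_def by auto
  qed
  have mem: "w \<in> branch t \<longleftrightarrow> \<phi> w \<in> lpath H (nat \<lfloor>t * 2 ^ H\<rfloor>)" if "w \<in> Dn" "t \<in> {0..<1}" for w t
  proof -
    obtain k j where w: "w = (k, j)" by force
    have "1 \<le> k" "k \<le> n" using that w unfolding Dn_def dyadic_tree_upto_def by auto
    then show ?thesis using branch_char[OF that(2) n1, of k j] that w
      unfolding \<phi>_def Dn_def H_def by (auto simp: lpath_iff)
  qed
  have cnt: "card (G \<inter> branch t) = card (G0 \<inter> lpath H (nat \<lfloor>t * 2 ^ H\<rfloor>))" if "t \<in> {0..<1}" for t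
  proof -
    have "G \<inter> branch t = {w \<in> G. \<phi> w \<in> lpath H (nat \<lfloor>t * 2 ^ H\<rfloor>)}" using mem that GD by auto
    then have "\<phi> ` (G \<inter> branch t) = G0 \<inter> lpath H (nat \<lfloor>t * 2 ^ H\<rfloor>)" unfolding G0_def by auto
    moreover have "card (\<phi> ` (G \<inter> branch t)) = card (G \<inter> branch t)"
      by (rule card_image) (use injG in \<open>auto intro: inj_on_subset\<close>)
    ultimately show ?thesis by simp
  qed
  have "2 ^ l - 1 \<le> card (G0 \<inter> subt H 0 0)"
  proof (rule core[OF finG0, of 0 H H l])
    show "0 + H = H" by simp
    show "l \<le> H + 1" using assms unfolding H_def by simp
    show "\<forall>w\<in>subt H 0 0 - G0. \<exists>x. w \<in> lpath H x \<and> l \<le> card (G0 \<inter> subt H 0 0 \<inter> lpath H x)"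
    proof
      fix w' assume w': "w' \<in> subt H 0 0 - G0"
      obtain a b where ab: "w' = (a, b)" by force
      have "a \<le> H" "b div 2 ^ a = 0" using w' ab unfolding subt_def by auto
      then have "b < 2 ^ a" by (simp add: div_eq_0_iff)
      define w where "w = (a + 1, b + 1)"
      have wD: "w \<in> Dn" using \<open>a \<le> H\<close> \<open>b < 2 ^ a\<close> n1 unfolding w_def Dn_def dyadic_tree_upto_def H_def by auto
      have pw: "\<phi> w = w'" unfolding w_def \<phi>_def ab by simp
      have "w \<notin> G" using w' pw unfolding G0_def by auto
      then obtain t where t: "t \<in> {0..<1}" "w \<in> branch t" "l \<le> card (G \<inter> branch t)"
        using satG wD by blast
      have "w' \<in> lpath H (nat \<lfloor>t * 2 ^ H\<rfloor>)" using mem[OF wD t(1)] t(2) pw by simp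
      moreover have "G0 \<inter> subt H 0 0 \<inter> lpath H (nat \<lfloor>t * 2 ^ H\<rfloor>) = G0 \<inter> lpath H (nat \<lfloor>t * 2 ^ H\<rfloor>)"
        using G0sub by auto
      ultimately show "\<exists>x. w' \<in> lpath H x \<and> l \<le> card (G0 \<inter> subt H 0 0 \<inter> lpath H x)"
        using t(3) cnt[OF t(1)] by auto
    qed
  qed
  then have bigG: "2 ^ l - 1 \<le> card G" using G0sub cG0 by (simp add: Int_absorb2)
  have "card (G - F) = card G - card F" using FG finG by (simp add: card_Diff_subset finite_subset)
  then have "2 ^ l - 1 - card F \<le> card (G - F)" using bigG by simp
  then obtain F0 where F0: "F0 \<subseteq> G - F" "card F0 = 2 ^ l - 1 - card F"
    by (meson obtain_subset_with_card_n)
  have "local_height (F \<union> F0) \<le> local_height G" by (rule lh_mono) (use F0 FG finG in auto)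
  then show ?thesis using F0 GD lhG unfolding Dn_def by (intro exI[of _ F0]) auto
qed


end
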